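(* For every integer $N\ge 0$, let $T_{2\times 3}(8,N)$ be the number of tilings of an $8\times n$ rectangle, $n=3N/4$, by $N$ tiles of size $2\times 3$ (and $0$ if $3N/4\notin\mathbb{Z}$). Then, as formal power series, \[ \sum_{N\ge 0} T_{2\times 3}(8,N)\,z^N=\frac{(1-z^4)^2}{1-3z^4+z^{12}-z^{16}}. \]
   Context: A tiling of an $m\times n$ rectangle (width $m$, length $n$, made of $mn$ unit squares) by $a\times b$ tiles is a partition of the rectangle into non-overlapping axis-parallel $a\times b$ rectangles with integer corner coordinates, each placed in either of its two orientations. Tilings related by reflections or rotations of the rectangle are counted as distinct. The empty tiling counts once for $N=0$. *)

theory Defs
  imports "HOL-Computational_Algebra.Formal_Power_Series"
begin

text \<open>A cell is a unit square, identified by the integer coordinates (i,j) of its lower-left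
corner. The m x n rectangle (width m, length n) is the set of cells {0..<m} x {0..<n}.\<close>

definition rect :: "nat \<Rightarrow> nat \<Rightarrow> (nat \<times> nat) set" where
  "rect m n = {0..<m} \<times> {0..<n}"

definition is_tile :: "nat \<Rightarrow> nat \<Rightarrow> (nat \<times> nat) set \<Rightarrow> bool" where
  "is_tile a b t \<longleftrightarrow> (\<exists>x y. t = {x..<x+a} \<times> {y..<y+b} \<or> t = {x..<x+b} \<times> {y..<y+a})"

definition is_tiling :: "nat \<Rightarrow> nat \<Rightarrow> nat \<Rightarrow> nat \<Rightarrow> (nat \<times> nat) set set \<Rightarrow> bool" where
  "is_tiling a b m n T \<longleftrightarrow>
     (\<forall>t\<in>T. is_tile a b t) \<and>
     (\<forall>t\<in>T. \<forall>u\<in>T. t \<noteq> u \<longrightarrow> t \<inter> u = {}) \<and>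
     \<Union>T = rect m n"

definition num_tilings :: "nat \<Rightarrow> nat \<Rightarrow> nat \<Rightarrow> nat \<Rightarrow> nat \<Rightarrow> nat" where
  "num_tilings a b m n N = card {T. is_tiling a b m n T \<and> card T = N}"

definition T23_8 :: "nat \<Rightarrow> nat" where
  "T23_8 N = (if 4 dvd 3 * N then num_tilings 2 3 8 (3 * N div 4) N else 0)"

end

theory Submission
  imports Defs
begin


definition tilings :: "(nat \<times> nat) set \<Rightarrow> (nat \<times> nat) set set set" where
  "tilings R = {T. (\<forall>t\<in>T. is_tile 2 3 t) \<and> (\<forall>t\<in>T. \<forall>u\<in>T. t \<noteq> u \<longrightarrow> t \<inter> u = {}) \<and> \<Union>T = R}"

definition cnt :: "(nat \<times> nat) set \<Rightarrow> nat" where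
  "cnt R = card (tilings R)"

lemma tile_card: "is_tile 2 3 t \<Longrightarrow> card t = 6"
  unfolding is_tile_def by (auto simp: card_cartesian_product)

lemma tile_nonempty: "is_tile 2 3 t \<Longrightarrow> t \<noteq> {}"
  using tile_card by fastforce

lemma tile_finite: "is_tile 2 3 t \<Longrightarrow> finite t"
  unfolding is_tile_def by auto

lemma finite_tilings: "finite R \<Longrightarrow> finite (tilings R)"
proof -
  assume "finite R"
  have "tilings R \<subseteq> Pow (Pow R)" unfolding tilings_def by auto
  then show ?thesis using \<open>finite R\<close> finite_subset by blast
qed

lemma tilings_empty: "tilings {} = {{}}"
  unfolding tilings_def using tile_nonempty by auto

lemma cnt_empty: "cnt {} = 1"
  by (simp add: cnt_def tilings_empty)

lemma split_count:
  assumes fin: "finite R" and c: "c \<in> R"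
  shows "cnt R = (\<Sum>t\<in>{t. is_tile 2 3 t \<and> c \<in> t \<and> t \<subseteq> R}. cnt (R - t))"
proof -
  define C where "C = {t. is_tile 2 3 t \<and> c \<in> t \<and> t \<subseteq> R}"
  have "C \<subseteq> Pow R" unfolding C_def by auto
  then have fC: "finite C" using fin finite_subset by blast
  have eq: "tilings R = (\<Union>t\<in>C. insert t ` tilings (R - t))"
  proof
    show "tilings R \<subseteq> (\<Union>t\<in>C. insert t ` tilings (R - t))"
    proof
      fix T assume T: "T \<in> tilings R"
      then have "c \<in> \<Union>T" using c unfolding tilings_def by auto
      then obtain t where t: "t \<in> T" "c \<in> t" by auto
      have tR: "t \<subseteq> R" using T t unfolding tilings_def by auto
      have tC: "t \<in> C" using T t tR unfolding C_def tilings_def by auto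
      have "T - {t} \<in> tilings (R - t)"
        using T t unfolding tilings_def by auto
      moreover have "T = insert t (T - {t})" using t by auto
      ultimately show "T \<in> (\<Union>t\<in>C. insert t ` tilings (R - t))" using tC by blast
    qed
  next
    show "(\<Union>t\<in>C. insert t ` tilings (R - t)) \<subseteq> tilings R"
    proof
      fix T assume "T \<in> (\<Union>t\<in>C. insert t ` tilings (R - t))"
      then obtain t T' where tC: "t \<in> C" and T': "T' \<in> tilings (R - t)" and TT: "T = insert t T'"
        by auto
      have tR: "t \<subseteq> R" "is_tile 2 3 t" using tC unfolding C_def by auto
      have sub: "\<forall>u\<in>T'. u \<subseteq> R - t" using T' unfolding tilings_def by auto
      show "T \<in> tilings R"
        unfolding TT tilings_def
      proof (intro CollectI conjI)
        show "\<forall>u\<in>insert t T'. is_tile 2 3 u" using T' tR unfolding tilings_def by auto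
        show "\<forall>u\<in>insert t T'. \<forall>v\<in>insert t T'. u \<noteq> v \<longrightarrow> u \<inter> v = {}"
          using T' sub unfolding tilings_def by blast
        show "\<Union>(insert t T') = R" using T' tR unfolding tilings_def by auto
      qed
    qed
  qed
  have notin: "t \<notin> T'" if "t \<in> C" "T' \<in> tilings (R - t)" for t T'
  proof
    assume "t \<in> T'"
    then have "t \<subseteq> R - t" using that(2) unfolding tilings_def by auto
    moreover have "c \<in> t" using that(1) unfolding C_def by auto
    ultimately show False by auto
  qed
  have inj: "inj_on (insert t) (tilings (R - t))" if "t \<in> C" for t
  proof (rule inj_onI)
    fix A B assume A: "A \<in> tilings (R - t)" and B: "B \<in> tilings (R - t)" and AB: "insert t A = insert t B"
    have "t \<notin> A" "t \<notin> B" using notin[OF that A] notin[OF that B] by auto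
    then show "A = B" using AB by (metis insert_ident)
  qed
  have disj: "insert t ` tilings (R - t) \<inter> insert t' ` tilings (R - t') = {}"
    if "t \<in> C" "t' \<in> C" "t \<noteq> t'" for t t'
  proof (rule ccontr)
    assume "insert t ` tilings (R - t) \<inter> insert t' ` tilings (R - t') \<noteq> {}"
    then obtain A B where A: "A \<in> tilings (R - t)" and B: "B \<in> tilings (R - t')"
      and AB: "insert t A = insert t' B" by blast
    have "t \<in> B" using AB that(3) by blast
    then have "t \<subseteq> R - t'" using B unfolding tilings_def by auto
    moreover have "c \<in> t" "c \<in> t'" using that unfolding C_def by auto
    ultimately show False by auto
  qed
  have fin2: "finite (insert t ` tilings (R - t))" for t
    using fin by (simp add: finite_tilings)
  have "cnt R = card (\<Union>t\<in>C. insert t ` tilings (R - t))"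
    unfolding cnt_def eq ..
  also have "\<dots> = (\<Sum>t\<in>C. card (insert t ` tilings (R - t)))"
    by (rule card_UN_disjoint[OF fC]) (use fin2 disj in auto)
  also have "\<dots> = (\<Sum>t\<in>C. cnt (R - t))"
    by (rule sum.cong) (auto simp: cnt_def card_image inj)
  finally show ?thesis unfolding C_def .
qed

definition sh :: "nat \<Rightarrow> nat \<times> nat \<Rightarrow> nat \<times> nat" where
  "sh m p = (fst p, snd p + m)"
definition un :: "nat \<Rightarrow> nat \<times> nat \<Rightarrow> nat \<times> nat" where
  "un m p = (fst p, snd p - m)"

lemma inj_sh: "inj (sh m)"
  unfolding sh_def inj_def by auto

lemma sh_rect: "sh m ` (A \<times> {y..<z}) = A \<times> {y+m..<z+m}"
proof
  show "sh m ` (A \<times> {y..<z}) \<subseteq> A \<times> {y + m..<z + m}" unfolding sh_def by auto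
  show "A \<times> {y + m..<z + m} \<subseteq> sh m ` (A \<times> {y..<z})"
  proof
    fix p assume p: "p \<in> A \<times> {y + m..<z + m}"
    then have "p = sh m (fst p, snd p - m)" "(fst p, snd p - m) \<in> A \<times> {y..<z}"
      unfolding sh_def by auto
    then show "p \<in> sh m ` (A \<times> {y..<z})" by blast
  qed
qed

lemma un_rect: "m \<le> y \<Longrightarrow> un m ` (A \<times> {y..<z}) = A \<times> {y-m..<z-m}"
proof
  assume "m \<le> y"
  show "un m ` (A \<times> {y..<z}) \<subseteq> A \<times> {y - m..<z - m}" unfolding un_def using \<open>m \<le> y\<close> by auto
  show "A \<times> {y - m..<z - m} \<subseteq> un m ` (A \<times> {y..<z})"
  proof
    fix p assume p: "p \<in> A \<times> {y - m..<z - m}"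
    then have "p = un m (fst p, snd p + m)" "(fst p, snd p + m) \<in> A \<times> {y..<z}"
      unfolding un_def using \<open>m \<le> y\<close> by auto
    then show "p \<in> un m ` (A \<times> {y..<z})" by blast
  qed
qed

lemma tile_sh:
  assumes "is_tile a b t" shows "is_tile a b (sh m ` t)"
proof -
  obtain x y where t: "t = {x..<x+a} \<times> {y..<y+b} \<or> t = {x..<x+b} \<times> {y..<y+a}"
    using assms unfolding is_tile_def by auto
  have e: "y + a + m = (y + m) + a" "y + b + m = (y + m) + b" by simp_all
  have "sh m ` t = {x..<x+a} \<times> {y+m..<(y+m)+b} \<or> sh m ` t = {x..<x+b} \<times> {y+m..<(y+m)+a}"
    using t by (elim disjE) (simp_all only: sh_rect e simp_thms)
  then show ?thesis unfolding is_tile_def by blast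
qed

lemma tile_un:
  assumes "is_tile a b t" "\<forall>p\<in>t. m \<le> snd p" "a > 0" "b > 0"
  shows "is_tile a b (un m ` t)"
proof -
  obtain x y where t: "t = {x..<x+a} \<times> {y..<y+b} \<or> t = {x..<x+b} \<times> {y..<y+a}"
    using assms(1) unfolding is_tile_def by auto
  have "(x,y) \<in> t" using t assms(3,4) by auto
  then have my: "m \<le> y" using assms(2) by auto
  have e: "y + a - m = (y - m) + a" "y + b - m = (y - m) + b" using my by simp_all
  have "un m ` t = {x..<x+a} \<times> {y-m..<(y-m)+b} \<or> un m ` t = {x..<x+b} \<times> {y-m..<(y-m)+a}"
    using t by (elim disjE) (simp_all only: un_rect[OF my] e simp_thms)
  then show ?thesis unfolding is_tile_def by blast
qed

lemma cnt_shift: "cnt (sh m ` R) = cnt R"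
proof -
  define \<Phi> where "\<Phi> = (\<lambda>T. (\<lambda>t. sh m ` t) ` T)"
  have inj1: "inj (\<lambda>t. sh m ` t)" using inj_image_eq_iff[OF inj_sh] unfolding inj_def by blast
  have injP: "inj_on \<Phi> (tilings R)"
  proof (rule inj_onI)
    fix A B assume "\<Phi> A = \<Phi> B"
    then show "A = B" unfolding \<Phi>_def using inj_image_eq_iff[OF inj1, of A B] by simp
  qed
  have img: "\<Phi> ` tilings R = tilings (sh m ` R)"
  proof
    show "\<Phi> ` tilings R \<subseteq> tilings (sh m ` R)"
    proof
      fix U assume "U \<in> \<Phi> ` tilings R"
      then obtain T where T: "T \<in> tilings R" and U: "U = \<Phi> T" by auto
      show "U \<in> tilings (sh m ` R)"
        unfolding tilings_def U \<Phi>_def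
      proof (intro CollectI conjI)
        show "\<forall>t\<in>(\<lambda>t. sh m ` t) ` T. is_tile 2 3 t" using T tile_sh unfolding tilings_def by auto
        show "\<forall>t\<in>(\<lambda>t. sh m ` t) ` T. \<forall>u\<in>(\<lambda>t. sh m ` t) ` T. t \<noteq> u \<longrightarrow> t \<inter> u = {}"
        proof (intro ballI impI)
          fix t' u' assume "t' \<in> (\<lambda>t. sh m ` t) ` T" "u' \<in> (\<lambda>t. sh m ` t) ` T" "t' \<noteq> u'"
          then obtain t u where tu: "t \<in> T" "u \<in> T" "t' = sh m ` t" "u' = sh m ` u" by blast
          then have "t \<noteq> u" using \<open>t' \<noteq> u'\<close> by blast
          then have "t \<inter> u = {}" using T tu unfolding tilings_def by blast
          then show "t' \<inter> u' = {}" unfolding tu image_Int[OF inj_sh, symmetric] by simp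
        qed
        show "\<Union> ((\<lambda>t. sh m ` t) ` T) = sh m ` R" using T unfolding tilings_def by auto
      qed
    qed
  next
    show "tilings (sh m ` R) \<subseteq> \<Phi> ` tilings R"
    proof
      fix U assume U: "U \<in> tilings (sh m ` R)"
      have ge: "\<forall>p\<in>u. m \<le> snd p" if "u \<in> U" for u
      proof
        fix p assume "p \<in> u"
        then have "p \<in> sh m ` R" using U that unfolding tilings_def by blast
        then show "m \<le> snd p" by (auto simp: sh_def)
      qed
      have shun: "sh m ` (un m ` u) = u" if "u \<in> U" for u
      proof -
        have id: "sh m (un m p) = p" if "p \<in> u" for p using ge[OF \<open>u \<in> U\<close>] that
          unfolding sh_def un_def by auto
        have "sh m ` (un m ` u) = (\<lambda>p. sh m (un m p)) ` u" by (simp only: image_image)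
        also have "\<dots> = (\<lambda>p. p) ` u" by (rule image_cong) (auto simp: id)
        finally show ?thesis by simp
      qed
      define T where "T = (\<lambda>u. un m ` u) ` U"
      have "T \<in> tilings R"
        unfolding tilings_def
      proof (intro CollectI conjI)
        show "\<forall>t\<in>T. is_tile 2 3 t" unfolding T_def using U ge tile_un[of 2 3] unfolding tilings_def by auto
        show "\<forall>t\<in>T. \<forall>u\<in>T. t \<noteq> u \<longrightarrow> t \<inter> u = {}"
        proof (intro ballI impI)
          fix t u assume "t \<in> T" "u \<in> T" "t \<noteq> u"
          then obtain t' u' where t': "t' \<in> U" "t = un m ` t'" and u': "u' \<in> U" "u = un m ` u'" 
            unfolding T_def by auto
          have "t' \<noteq> u'" using \<open>t \<noteq> u\<close> t' u' by auto
          then have "t' \<inter> u' = {}" using U t' u' unfolding tilings_def by auto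
          moreover have "sh m ` t = t'" "sh m ` u = u'" using shun t' u' by simp_all
          ultimately have "sh m ` t \<inter> sh m ` u = {}" by simp
          then show "t \<inter> u = {}" by blast
        qed
        have "(\<lambda>u. sh m ` un m ` u) ` U = (\<lambda>u. u) ` U" by (rule image_cong) (simp_all add: shun)
        then have "sh m ` \<Union>T = \<Union>U" unfolding T_def image_Union image_image by simp
        also have "\<dots> = sh m ` R" using U unfolding tilings_def by auto
        finally show "\<Union>T = R" using inj_sh by (simp add: inj_image_eq_iff)
      qed
      moreover have "\<Phi> T = U"
      proof -
        have "\<Phi> T = (\<lambda>u. sh m ` un m ` u) ` U" unfolding \<Phi>_def T_def by (simp only: image_image)
        also have "\<dots> = (\<lambda>u. u) ` U" by (rule image_cong) (simp_all add: shun)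
        finally show ?thesis by simp
      qed
      ultimately show "U \<in> \<Phi> ` tilings R" by blast
    qed
  qed
  have "bij_betw \<Phi> (tilings R) (tilings (sh m ` R))"
    using injP img by (simp add: bij_betw_def)
  then show ?thesis unfolding cnt_def by (rule bij_betw_same_card[symmetric])
qed




fun fz :: "nat list \<Rightarrow> nat" where
  "fz [] = 0"
| "fz (x#xs) = (if x = 0 then 0 else Suc (fz xs))"

definition place :: "nat list \<Rightarrow> nat \<Rightarrow> nat \<Rightarrow> nat \<Rightarrow> nat list" where
  "place q i a b = map (\<lambda>k. if i \<le> k \<and> k < i + a then b else q ! k) [0..<length q]"

definition nrm :: "nat list \<Rightarrow> nat list \<times> nat" where
  "nrm p = (map (\<lambda>x. x - Min (set p)) p, Min (set p))"

definition trs :: "nat list \<Rightarrow> (nat list \<times> nat) list" where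
  "trs q = (let i = fz q in
     (if i + 2 \<le> 8 \<and> q ! (i+1) = 0 then [nrm (place q i 2 3)] else []) @
     (if i + 3 \<le> 8 \<and> q ! (i+1) = 0 \<and> q ! (i+2) = 0 then [nrm (place q i 3 2)] else []))"

definition cf :: "int list \<Rightarrow> nat \<Rightarrow> int" where
  "cf xs n = (if n < length xs then xs ! n else 0)"

definition Dl :: "int list" where "Dl = [1,0,0,-3,0,0,0,0,0,1,0,0,-1]"
definition S :: "nat list list" where "S = [[0,0,0,0,0,0,0,0], [0,0,0,0,0,0,1,1], [0,0,0,0,0,0,2,2], [0,0,0,1,1,0,0,0], [0,0,0,2,2,0,0,0], [0,0,1,1,1,1,1,1], [0,0,2,2,2,2,2,2], [1,1,0,0,0,0,0,0], [1,1,1,0,0,1,1,1], [1,1,1,1,1,1,0,0], [1,1,2,2,2,0,0,0], [1,1,2,2,2,3,3,0], [1,1,3,3,0,0,0,0], [1,1,3,3,2,2,2,0], [1,1,3,3,3,3,0,0], [2,2,0,0,0,0,0,0], [2,2,2,0,0,0,0,0], [2,2,2,0,0,0,1,1], [2,2,2,0,0,0,2,2], [2,2,2,1,1,0,0,0], [2,2,2,1,1,3,3,0], [2,2,2,2,2,0,0,0], [2,2,2,2,2,2,0,0], [2,2,2,2,2,3,3,0], [2,2,2,3,3,0,0,0], [2,2,2,3,3,0,1,1], [2,2,2,3,3,0,2,2], [2,2,2,3,3,3,3,0], [2,2,3,3,0,0,0,0], [2,2,3,3,2,2,2,0], [2,2,3,3,3,3,0,0], [3,3,0,0,0,0,0,0],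 [3,3,0,0,0,0,1,1], [3,3,0,0,0,0,2,2], [3,3,0,1,1,0,0,0], [3,3,0,2,2,0,0,0], [3,3,2,2,2,0,0,0], [3,3,2,2,2,0,1,1], [3,3,2,2,2,0,2,2], [3,3,2,2,2,3,3,0], [3,3,3,3,0,0,0,0], [3,3,3,3,0,0,1,1], [3,3,3,3,0,0,2,2], [3,3,3,3,2,2,2,0], [3,3,3,3,3,3,0,0]]"

definition Ptab :: "(nat list \<times> int list) list" where "Ptab = [([0,0,0,0,0,0,0,0], [1,0,0,-2,0,0,1]),
  ([0,0,0,0,0,0,1,1], [0,0,0,0,1]),
  ([0,0,0,0,0,0,2,2], [0,0,1,0,0,-1]),
  ([0,0,0,1,1,0,0,0], [0,0,0,0,1,0,0,-2,0,0,1]),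
  ([0,0,0,2,2,0,0,0], [0,0,1,0,0,-2,0,0,1]),
  ([0,0,1,1,1,1,1,1], [0,0,0,1,0,0,-1]),
  ([0,0,2,2,2,2,2,2], [0,0,0,0,0,0,1]),
  ([1,1,0,0,0,0,0,0], [0,0,0,0,1]),
  ([1,1,1,0,0,1,1,1], [0,0,0,1,0,0,-2,0,0,1]),
  ([1,1,1,1,1,1,0,0], [0,0,0,1,0,0,-1]),
  ([1,1,2,2,2,0,0,0], [0,0,0,0,1,0,0,-1]),
  ([1,1,2,2,2,3,3,0], []),
  ([1,1,3,3,0,0,0,0], [0,0,0,0,0,0,0,1]),
  ([1,1,3,3,2,2,2,0], []),
  ([1,1,3,3,3,3,0,0], [0,0,0,0,0,0,0,1]),
  ([2,2,0,0,0,0,0,0], [0,0,1,0,0,-1]),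
  ([2,2,2,0,0,0,0,0], [0,0,0,0,0,0,2,0,0,-2,0,0,1]),
  ([2,2,2,0,0,0,1,1], [0,0,0,0,1,0,0,-1]),
  ([2,2,2,0,0,0,2,2], [0,0,1,0,0,-2,0,0,1]),
  ([2,2,2,1,1,0,0,0], [0,0,0,0,1,0,0,-2,0,0,1]),
  ([2,2,2,1,1,3,3,0], []),
  ([2,2,2,2,2,0,0,0], [0,0,1,0,0,-2,0,0,1]),
  ([2,2,2,2,2,2,0,0], [0,0,0,0,0,0,1]),
  ([2,2,2,2,2,3,3,0], []),
  ([2,2,2,3,3,0,0,0], [0,0,0,0,0,0,1,0,0,-2,0,0,1]),
  ([2,2,2,3,3,0,1,1], []),
  ([2,2,2,3,3,0,2,2], []),
  ([2,2,2,3,3,3,3,0], []),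
  ([2,2,3,3,0,0,0,0], [0,0,0,0,0,1,0,0,-1]),
  ([2,2,3,3,2,2,2,0], []),
  ([2,2,3,3,3,3,0,0], [0,0,0,0,0,1,0,0,-1]),
  ([3,3,0,0,0,0,0,0], [0,0,0,1,0,0,-1,0,0,1]),
  ([3,3,0,0,0,0,1,1], [0,0,0,0,0,0,0,1]),
  ([3,3,0,0,0,0,2,2], [0,0,0,0,0,1,0,0,-1]),
  ([3,3,0,1,1,0,0,0], []),
  ([3,3,0,2,2,0,0,0], []),
  ([3,3,2,2,2,0,0,0], [0,0,0,0,0,0,1]),
  ([3,3,2,2,2,0,1,1], []),
  ([3,3,2,2,2,0,2,2], []),
  ([3,3,2,2,2,3,3,0], []),
  ([3,3,3,3,0,0,0,0], [0,0,0,1,0,0,-2,0,0,1]),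
  ([3,3,3,3,0,0,1,1], [0,0,0,0,0,0,0,1]),
  ([3,3,3,3,0,0,2,2], [0,0,0,0,0,1,0,0,-1]),
  ([3,3,3,3,2,2,2,0], []),
  ([3,3,3,3,3,3,0,0], [0,0,0,1,0,0,-2,0,0,1])]"

definition P :: "nat list \<Rightarrow> int list" where
  "P q = (case map_of Ptab q of Some p \<Rightarrow> p | None \<Rightarrow> [])"

definition zs :: "nat list" where "zs = replicate 8 0"

definition chk :: "nat list \<Rightarrow> bool" where
  "chk q = (length q = 8 \<and> 0 \<in> set q \<and> sum_list q \<le> 30 \<and> length (P q) \<le> 13 \<and>
     list_all (\<lambda>(q',d). q' \<in> set S \<and> d \<le> 3 \<and> (d = 0 \<longrightarrow> sum_list q < sum_list q')) (trs q) \<and>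
     list_all (\<lambda>n. cf (P q) n = (if q = zs then cf Dl n else 0) +
        sum_list (map (\<lambda>(q',d). if d \<le> n then cf (P q') (n-d) else 0) (trs q))) [0..<16])"

lemma chk_all: "list_all chk S"
  by code_simp




definition Reg :: "nat list \<Rightarrow> nat \<Rightarrow> (nat \<times> nat) set" where
  "Reg q L = {p. fst p < 8 \<and> q ! fst p \<le> snd p \<and> snd p < L}"

lemma Reg_finite: "finite (Reg q L)"
proof -
  have "Reg q L \<subseteq> {0..<8} \<times> {0..<L}" unfolding Reg_def by auto
  then show ?thesis using finite_subset by blast
qed

lemma fz_props: "0 \<in> set q \<Longrightarrow> fz q < length q \<and> q ! fz q = 0 \<and> (\<forall>k<fz q. q ! k \<noteq> 0)"
proof (induction q)
  case Nil then show ?case by simp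
next
  case (Cons x xs)
  show ?case
  proof (cases "x = 0")
    case True then show ?thesis by simp
  next
    case False
    then have "0 \<in> set xs" using Cons.prems by simp
    then have IH: "fz xs < length xs \<and> xs ! fz xs = 0 \<and> (\<forall>k<fz xs. xs ! k \<noteq> 0)" using Cons.IH by simp
    have "\<forall>k<Suc (fz xs). (x # xs) ! k \<noteq> 0"
    proof (intro allI impI)
      fix k assume "k < Suc (fz xs)"
      then show "(x # xs) ! k \<noteq> 0" using IH False by (cases k) auto
    qed
    then show ?thesis using False IH by simp
  qed
qed

lemma place_len[simp]: "length (place q i a b) = length q"
  unfolding place_def by simp

lemma place_nth: "k < length q \<Longrightarrow> place q i a b ! k = (if i \<le> k \<and> k < i + a then b else q ! k)"
  unfolding place_def by simp

lemma Reg_minus: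
  assumes len: "length q = 8" and ia: "i + a \<le> 8" and rows: "\<forall>k. i \<le> k \<and> k < i + a \<longrightarrow> q ! k = 0"
  shows "Reg q L - {i..<i+a} \<times> {0..<b} = Reg (place q i a b) L"
proof (rule set_eqI)
  fix p :: "nat \<times> nat"
  obtain x y where p: "p = (x, y)" by fastforce
  show "p \<in> Reg q L - {i..<i+a} \<times> {0..<b} \<longleftrightarrow> p \<in> Reg (place q i a b) L"
  proof (cases "x < 8")
    case True
    then show ?thesis unfolding p Reg_def using rows len by (auto simp: place_nth)
  next
    case False
    then show ?thesis unfolding p Reg_def by auto
  qed
qed

lemma cand:
  assumes len: "length q = 8" and i8: "i < 8" and qi: "q ! i = 0" and minl: "\<forall>k<i. q ! k \<noteq> 0"
  shows "{t. is_tile 2 3 t \<and> (i,0) \<in> t \<and> t \<subseteq> Reg q L} =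
    (if i+2 \<le> 8 \<and> q!(i+1) = 0 \<and> 3 \<le> L then {{i..<i+2} \<times> {0..<3}} else {}) \<union>
    (if i+3 \<le> 8 \<and> q!(i+1) = 0 \<and> q!(i+2) = 0 \<and> 2 \<le> L then {{i..<i+3} \<times> {0..<2}} else {})"
    (is "?A = ?B")
proof (intro equalityI subsetI)
  fix t assume "t \<in> ?A"
  then have tile: "is_tile 2 3 t" and ci: "(i,0) \<in> t" and sub: "t \<subseteq> Reg q L" by auto
  obtain x y where t: "t = {x..<x+2} \<times> {y..<y+3} \<or> t = {x..<x+3} \<times> {y..<y+2}"
    using tile unfolding is_tile_def by auto
  have y0: "y = 0" and xi: "x \<le> i" using t ci by auto
  have "(x, 0) \<in> t" using t y0 by auto
  then have "(x, 0) \<in> Reg q L" using sub by auto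
  then have "q ! x = 0" unfolding Reg_def by simp
  then have xe: "x = i" using xi minl by (metis le_neq_implies_less)
  from t show "t \<in> ?B"
  proof
    assume t1: "t = {x..<x+2} \<times> {y..<y+3}"
    have "(i+1, 0) \<in> Reg q L" "(i, 2) \<in> Reg q L" using sub unfolding t1 xe y0 by auto
    then have "i + 2 \<le> 8 \<and> q!(i+1) = 0 \<and> 3 \<le> L" unfolding Reg_def by auto
    then show "t \<in> ?B" unfolding t1 xe y0 by simp
  next
    assume t2: "t = {x..<x+3} \<times> {y..<y+2}"
    have "(i+1, 0) \<in> Reg q L" "(i+2, 0) \<in> Reg q L" "(i, 1) \<in> Reg q L"
      using sub unfolding t2 xe y0 by auto
    then have cc: "i + 3 \<le> 8 \<and> q!(i+1) = 0 \<and> q!(i+2) = 0 \<and> 2 \<le> L" unfolding Reg_def by auto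
    show "t \<in> ?B" unfolding t2 xe y0 using cc by (intro UnI2) (simp only: if_True insert_iff simp_thms add_0)
  qed
next
  fix t assume "t \<in> ?B"
  then consider (c1) "i+2 \<le> 8" "q!(i+1) = 0" "3 \<le> L" "t = {i..<i+2} \<times> {0..<3}"
    | (c2) "i+3 \<le> 8" "q!(i+1) = 0" "q!(i+2) = 0" "2 \<le> L" "t = {i..<i+3} \<times> {0..<2}"
    by (auto split: if_splits)
  then show "t \<in> ?A"
  proof cases
    case c1
    have "is_tile 2 3 t" unfolding is_tile_def c1(4) by (rule exI[of _ i], rule exI[of _ 0]) simp
    moreover have "t \<subseteq> Reg q L"
    proof
      fix p assume "p \<in> t"
      then have "fst p = i \<or> fst p = i + 1" "snd p < 3" unfolding c1(4) by auto
      then show "p \<in> Reg q L" unfolding Reg_def using c1 qi by auto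
    qed
    ultimately show ?thesis using c1 by auto
  next
    case c2
    have "is_tile 2 3 t" unfolding is_tile_def c2(5) by (rule exI[of _ i], rule exI[of _ 0], rule disjI2) (simp add: numeral_2_eq_2)
    moreover have "t \<subseteq> Reg q L"
    proof
      fix p assume "p \<in> t"
      then have "fst p = i \<or> fst p = i + 1 \<or> fst p = i + 2" "snd p < 2" unfolding c2(5) by auto
      then show "p \<in> Reg q L" unfolding Reg_def using c2 qi by auto
    qed
    ultimately show ?thesis using c2 by auto
  qed
qed

lemma shift_Reg:
  assumes len: "length p = 8" and mle: "\<forall>k<8. m \<le> p ! k" and mL: "m \<le> L"
  shows "Reg p L = sh m ` Reg (map (\<lambda>x. x - m) p) (L - m)"
proof (rule set_eqI)
  fix z :: "nat \<times> nat"
  obtain x y where z: "z = (x, y)" by fastforce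
  show "z \<in> Reg p L \<longleftrightarrow> z \<in> sh m ` Reg (map (\<lambda>x. x - m) p) (L - m)"
  proof
    assume "z \<in> Reg p L"
    then have h: "x < 8" "p ! x \<le> y" "y < L" unfolding z Reg_def by auto
    then have "m \<le> y" using mle by (meson le_trans)
    then have "(x, y - m) \<in> Reg (map (\<lambda>x. x - m) p) (L - m)" "z = sh m (x, y - m)"
      using h len unfolding Reg_def sh_def z by auto
    then show "z \<in> sh m ` Reg (map (\<lambda>x. x - m) p) (L - m)" by blast
  next
    assume "z \<in> sh m ` Reg (map (\<lambda>x. x - m) p) (L - m)"
    then obtain w where w: "w \<in> Reg (map (\<lambda>x. x - m) p) (L - m)" "z = sh m w" by blast
    then show "z \<in> Reg p L" using len mL mle unfolding Reg_def sh_def by auto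
  qed
qed

definition g :: "nat list \<Rightarrow> nat \<Rightarrow> nat" where
  "g q L = (if (\<forall>x\<in>set q. x \<le> L) then cnt (Reg q L) else 0)"

lemma term_eq:
  assumes len: "length q = 8" and ia: "i + a \<le> 8" and rows: "\<forall>k. i \<le> k \<and> k < i + a \<longrightarrow> q ! k = 0"
    and a0: "a > 0"
  shows "(case nrm (place q i a b) of (q',d) \<Rightarrow> if d \<le> L then g q' (L-d) else 0) =
    (if b \<le> L \<and> (\<forall>x\<in>set q. x \<le> L) then cnt (Reg (place q i a b) L) else 0)"
proof -
  define p where "p = place q i a b"
  define m where "m = Min (set p)"
  have lenp: "length p = 8" unfolding p_def using len by simp
  have pk: "p ! k = (if i \<le> k \<and> k < i + a then b else q ! k)" if "k < 8" for k
    unfolding p_def using that len by (simp add: place_nth)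
  have ne: "set p \<noteq> {}" using lenp by auto
  have mle: "\<forall>k<8. m \<le> p ! k"
  proof (intro allI impI)
    fix k :: nat assume "k < 8"
    then have "p ! k \<in> set p" using lenp by simp
    then show "m \<le> p ! k" unfolding m_def by simp
  qed
  have i8: "i < 8" using ia a0 by simp
  have pi: "p ! i = b" using pk[OF i8] a0 by simp
  have mb: "m \<le> b" using mle i8 pi by metis
  have allp: "(\<forall>x\<in>set p. x \<le> L) \<longleftrightarrow> b \<le> L \<and> (\<forall>x\<in>set q. x \<le> L)"
  proof
    assume A: "\<forall>x\<in>set p. x \<le> L"
    then have Ak: "p ! k \<le> L" if "k < 8" for k using that lenp by (metis nth_mem)
    have "b \<le> L" using Ak[of i] pi ia a0 by simp
    moreover have "\<forall>x\<in>set q. x \<le> L"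
    proof
      fix x assume "x \<in> set q"
      then obtain k where k: "k < 8" "x = q ! k" using len by (metis in_set_conv_nth)
      show "x \<le> L"
      proof (cases "i \<le> k \<and> k < i + a")
        case True then show ?thesis using rows k by simp
      next
        case False then show ?thesis using Ak[OF k(1)] pk[OF k(1), unfolded if_not_P[OF False]] k by simp
      qed
    qed
    ultimately show "b \<le> L \<and> (\<forall>x\<in>set q. x \<le> L)" ..
  next
    assume B: "b \<le> L \<and> (\<forall>x\<in>set q. x \<le> L)"
    show "\<forall>x\<in>set p. x \<le> L"
    proof
      fix x assume "x \<in> set p"
      then obtain k where k: "k < 8" "x = p ! k" using lenp by (metis in_set_conv_nth)
      have "q ! k \<le> L" using B k len by (metis nth_mem)
      then show "x \<le> L" using B k pk[OF k(1)] by simp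
    qed
  qed
  have nrmp: "nrm p = (map (\<lambda>x. x - m) p, m)" unfolding nrm_def m_def ..
  show ?thesis
  proof (cases "\<forall>x\<in>set p. x \<le> L")
    case True
    then have mL: "m \<le> L" using mb allp by simp
    have all': "\<forall>x\<in>set (map (\<lambda>x. x - m) p). x \<le> L - m" using True by auto
    have "cnt (Reg p L) = cnt (Reg (map (\<lambda>x. x - m) p) (L - m))"
      using shift_Reg[OF lenp mle mL] cnt_shift by simp
    then show ?thesis using True allp mL all' unfolding p_def[symmetric] nrmp g_def by simp
  next
    case False
    then obtain x where x: "x \<in> set p" "\<not> x \<le> L" by auto
    have "m \<le> x" unfolding m_def using x(1) by simp
    then have "\<not> (\<forall>y\<in>set (map (\<lambda>x. x - m) p). y \<le> L - m)" if "m \<le> L"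
      using x that by force
    then show ?thesis using False allp unfolding p_def[symmetric] nrmp g_def by auto
  qed
qed

lemma sys:
  assumes len: "length q = 8" and z: "0 \<in> set q"
  shows "g q L = (if q = zs \<and> L = 0 then 1 else 0) +
     sum_list (map (\<lambda>(q',d). if d \<le> L then g q' (L-d) else 0) (trs q))"
proof -
  define i where "i = fz q"
  have fzp: "i < 8" "q ! i = 0" "\<forall>k<i. q ! k \<noteq> 0" using fz_props[OF z] len unfolding i_def by auto
  define c1 where "c1 = (i + 2 \<le> 8 \<and> q ! (i+1) = 0)"
  define c2 where "c2 = (i + 3 \<le> 8 \<and> q ! (i+1) = 0 \<and> q ! (i+2) = 0)"
  define allq where "allq = (\<forall>x\<in>set q. x \<le> L)"
  define T1 where "T1 = (if 3 \<le> L \<and> allq then cnt (Reg (place q i 2 3) L) else 0)"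
  define T2 where "T2 = (if 2 \<le> L \<and> allq then cnt (Reg (place q i 3 2) L) else 0)"
  have r1: "\<forall>k. i \<le> k \<and> k < i + 2 \<longrightarrow> q ! k = 0" if c1
  proof (intro allI impI)
    fix k assume "i \<le> k \<and> k < i + 2"
    then have "k = i \<or> k = i + 1" by auto
    then show "q ! k = 0" using that fzp unfolding c1_def by auto
  qed
  have r2: "\<forall>k. i \<le> k \<and> k < i + 3 \<longrightarrow> q ! k = 0" if c2
  proof (intro allI impI)
    fix k assume "i \<le> k \<and> k < i + 3"
    then have "k = i \<or> k = i + 1 \<or> k = i + 2" by auto
    then show "q ! k = 0" using that fzp unfolding c2_def by auto
  qed
  have e1: "(case nrm (place q i 2 3) of (q',d) \<Rightarrow> if d \<le> L then g q' (L-d) else 0) = T1" if c1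
  proof -
    have "i + 2 \<le> 8" using that unfolding c1_def by simp
    from term_eq[OF len this r1[OF that], where b=3 and L=L] show ?thesis unfolding T1_def allq_def by simp
  qed
  have e2: "(case nrm (place q i 3 2) of (q',d) \<Rightarrow> if d \<le> L then g q' (L-d) else 0) = T2" if c2
  proof -
    have "i + 3 \<le> 8" using that unfolding c2_def by simp
    from term_eq[OF len this r2[OF that], where b=2 and L=L] show ?thesis unfolding T2_def allq_def by simp
  qed
  have S: "sum_list (map (\<lambda>(q',d). if d \<le> L then g q' (L-d) else 0) (trs q)) =
      (if c1 then T1 else 0) + (if c2 then T2 else 0)"
    unfolding trs_def Let_def i_def[symmetric] c1_def[symmetric] c2_def[symmetric]
    using e1 e2 by auto
  have zsq: "q = zs" if "\<forall>x\<in>set q. x \<le> 0"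
  proof -
    have "\<forall>x\<in>set q. x = 0" using that by auto
    then have "replicate (length q) 0 = q" by (rule replicate_length_same)
    then show ?thesis unfolding zs_def using len by simp
  qed
  show ?thesis
  proof (cases allq)
    case False
    have "q \<noteq> zs" using False unfolding allq_def zs_def by auto
    moreover have "g q L = 0" using False unfolding g_def allq_def by auto
    ultimately show ?thesis using False unfolding S unfolding T1_def T2_def by simp
  next
    case True
    show ?thesis
    proof (cases "L = 0")
      case L0: True
      then have "q = zs" using True zsq unfolding allq_def by simp
      moreover have "Reg q 0 = {}" unfolding Reg_def by auto
      ultimately have "g q L = 1" using L0 unfolding g_def by (simp add: cnt_empty zs_def)
      then show ?thesis using \<open>q = zs\<close> L0 unfolding S unfolding T1_def T2_def by simp
    next
      case L0: False
      have cin: "(i, 0) \<in> Reg q L" using fzp L0 unfolding Reg_def by auto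
      have "cnt (Reg q L) = (\<Sum>t\<in>{t. is_tile 2 3 t \<and> (i,0) \<in> t \<and> t \<subseteq> Reg q L}. cnt (Reg q L - t))"
        by (rule split_count[OF Reg_finite cin])
      also have "\<dots> = (\<Sum>t\<in>(if c1 \<and> 3 \<le> L then {{i..<i+2} \<times> {0..<3}} else {}) \<union>
           (if c2 \<and> 2 \<le> L then {{i..<i+3} \<times> {0..<2}} else {}). cnt (Reg q L - t))"
        unfolding cand[OF len fzp] c1_def c2_def by (simp add: conj_assoc)
      also have "\<dots> = (if c1 \<and> 3 \<le> L then cnt (Reg q L - {i..<i+2} \<times> {0..<3}) else 0) +
          (if c2 \<and> 2 \<le> L then cnt (Reg q L - {i..<i+3} \<times> {0..<2}) else 0)"
      proof -
        have ne: "{i..<i+2} \<times> {0..<3::nat} \<noteq> {i..<i+3} \<times> {0..<2}"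
        proof
          assume "{i..<i+2} \<times> {0..<3::nat} = {i..<i+3} \<times> {0..<2}"
          moreover have "(i+2, 0) \<in> {i..<i+3} \<times> {0..<2::nat}" by simp
          moreover have "(i+2, 0) \<notin> {i..<i+2} \<times> {0..<3::nat}" by simp
          ultimately show False by blast
        qed
        then show ?thesis by auto
      qed
      also have "\<dots> = (if c1 then T1 else 0) + (if c2 then T2 else 0)"
      proof -
        have a1: "c1 \<and> 3 \<le> L \<Longrightarrow> Reg q L - {i..<i+2} \<times> {0..<3} = Reg (place q i 2 3) L"
          using Reg_minus[OF len _ r1] unfolding c1_def by blast
        have a2: "c2 \<and> 2 \<le> L \<Longrightarrow> Reg q L - {i..<i+3} \<times> {0..<2} = Reg (place q i 3 2) L"
          using Reg_minus[OF len _ r2] unfolding c2_def by blast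
        show ?thesis using True a1 a2 unfolding T1_def T2_def by auto
      qed
      finally have "g q L = (if c1 then T1 else 0) + (if c2 then T2 else 0)"
        using True unfolding g_def allq_def by simp
      then show ?thesis using L0 unfolding S by simp
    qed
  qed
qed




notation fps_nth (infixl "$" 75)

lemma chkS: "q \<in> set S \<Longrightarrow> chk q"
  using chk_all by (simp add: list_all_iff)

definition G :: "nat list \<Rightarrow> rat fps" where "G q = Abs_fps (\<lambda>L. of_nat (g q L))"
definition Df :: "rat fps" where "Df = Abs_fps (\<lambda>n. of_int (cf Dl n))"
definition PP :: "nat list \<Rightarrow> rat fps" where "PP q = Abs_fps (\<lambda>n. of_int (cf (P q) n))"

lemma sum_list_coeff:
  "(sum_list (map (\<lambda>(q',d). fps_X^d * F q') xs)) $ n =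
   sum_list (map (\<lambda>(q',d). if d \<le> n then F q' $ (n-d) else (0::'a::comm_ring_1)) xs)"
  by (induction xs) (auto simp: fps_X_power_mult_nth)

lemma of_nat_sum_list_map: "(of_nat (sum_list (map f xs)) :: 'a::comm_semiring_1) = sum_list (map (\<lambda>x. of_nat (f x)) xs)"
  by (induction xs) auto

lemma of_int_sum_list_map: "(of_int (sum_list (map f xs)) :: 'a::comm_ring_1) = sum_list (map (\<lambda>x. of_int (f x)) xs)"
  by (induction xs) auto

lemma sum_list_cong': "(\<And>x. x \<in> set xs \<Longrightarrow> f1 x = f2 x) \<Longrightarrow> sum_list (map f1 xs) = sum_list (map f2 xs)"
  by (induction xs) auto

lemma mult_sum_list_case:
  "(c::'a::comm_ring_1 fps) * sum_list (map (\<lambda>(q',d). fps_X^d * F q') xs) =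
   sum_list (map (\<lambda>(q',d). fps_X^d * (c * F q')) xs)"
  by (induction xs) (auto simp: algebra_simps)

lemma sum_list_zero: "(\<And>x. x \<in> set xs \<Longrightarrow> f x = 0) \<Longrightarrow> sum_list (map f xs) = (0::'a::comm_monoid_add)"
  by (induction xs) auto

lemma Gn: "G q $ n = of_nat (g q n)" unfolding G_def by simp

lemma Gsys:
  assumes "q \<in> set S"
  shows "G q = (if q = zs then 1 else 0) + sum_list (map (\<lambda>(q',d). fps_X^d * G q') (trs q))"
proof (rule fps_ext)
  fix n
  have c: "length q = 8" "0 \<in> set q" using chkS[OF assms] unfolding chk_def by auto
  have "G q $ n = of_nat (g q n)" unfolding G_def by simp
  also have "\<dots> = (if q = zs \<and> n = 0 then 1 else 0) +
      sum_list (map (\<lambda>x. of_nat ((\<lambda>(q',d). if d \<le> n then g q' (n-d) else 0) x)) (trs q))"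
    by (subst sys[OF c]) (simp only: of_nat_add of_nat_sum_list_map, simp)
  also have "sum_list (map (\<lambda>x. of_nat ((\<lambda>(q',d). if d \<le> n then g q' (n-d) else 0) x)) (trs q)) =
     sum_list (map (\<lambda>(q',d). if d \<le> n then G q' $ (n-d) else (0::rat)) (trs q))"
    by (rule sum_list_cong') (auto simp: Gn)
  also have "(if q = zs \<and> n = 0 then 1 else 0) + \<dots> = ((if q = zs then 1 else 0) + sum_list (map (\<lambda>(q',d). fps_X^d * G q') (trs q))) $ n"
    by (simp add: sum_list_coeff)
  finally show "G q $ n = ((if q = zs then 1 else 0) + sum_list (map (\<lambda>(q',d). fps_X^d * G q') (trs q))) $ n" .
qed

lemma Hc:
  assumes "q \<in> set S"
  shows "(Df * G q) $ n = (if q = zs then Df $ n else 0) +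
     sum_list (map (\<lambda>(q',d). if d \<le> n then (Df * G q') $ (n-d) else 0) (trs q))"
proof -
  have "Df * G q = (if q = zs then Df else 0) + sum_list (map (\<lambda>(q',d). fps_X^d * (Df * G q')) (trs q))"
    by (subst Gsys[OF assms]) (simp add: distrib_left mult_sum_list_case)
  then show ?thesis by (simp add: sum_list_coeff)
qed

lemma Pc:
  assumes "q \<in> set S"
  shows "PP q $ n = (if q = zs then Df $ n else 0) +
     sum_list (map (\<lambda>(q',d). if d \<le> n then PP q' $ (n-d) else 0) (trs q))"
proof -
  have c: "chk q" using chkS[OF assms] .
  have ci: "cf (P q) n = (if q = zs then cf Dl n else 0) +
        sum_list (map (\<lambda>(q',d). if d \<le> n then cf (P q') (n-d) else 0) (trs q))"
  proof (cases "n < 16")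
    case True
    then show ?thesis using c unfolding chk_def list_all_iff by auto
  next
    case False
    have l: "length (P q) \<le> 13" using c unfolding chk_def by auto
    have "cf (P q) n = 0" using l False unfolding cf_def by auto
    moreover have "cf Dl n = 0" using False unfolding cf_def Dl_def by auto
    moreover have "sum_list (map (\<lambda>(q',d). if d \<le> n then cf (P q') (n-d) else 0) (trs q)) = 0"
    proof -
      have "(case x of (q',d) \<Rightarrow> if d \<le> n then cf (P q') (n-d) else 0) = 0" if x: "x \<in> set (trs q)" for x
      proof -
        obtain q' d where xe: "x = (q', d)" by fastforce
        have "q' \<in> set S" "d \<le> 3" using c x unfolding chk_def list_all_iff xe by auto
        then have "length (P q') \<le> 13" using chkS unfolding chk_def by auto
        then show ?thesis unfolding xe cf_def using \<open>d \<le> 3\<close> False by auto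
      qed
      then show ?thesis by (rule sum_list_zero)
    qed
    ultimately show ?thesis by simp
  qed
  have "PP q $ n = of_int (cf (P q) n)" unfolding PP_def by simp
  also have "\<dots> = (if q = zs then Df $ n else 0) +
     sum_list (map (\<lambda>x. of_int ((\<lambda>(q',d). if d \<le> n then cf (P q') (n-d) else 0) x)) (trs q))"
    by (subst ci) (simp only: of_int_add of_int_sum_list_map, simp add: Df_def)
  also have "sum_list (map (\<lambda>x. of_int ((\<lambda>(q',d). if d \<le> n then cf (P q') (n-d) else 0) x)) (trs q)) =
     sum_list (map (\<lambda>(q',d). if d \<le> n then PP q' $ (n-d) else (0::rat)) (trs q))"
    by (rule sum_list_cong') (auto simp: PP_def)
  finally show ?thesis .
qed

lemma HP: "q \<in> set S \<Longrightarrow> (Df * G q) $ n = PP q $ n"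
proof (induction "n * 100 + (100 - sum_list q)" arbitrary: n q rule: less_induct)
  case less
  have c: "chk q" using chkS[OF less.prems] .
  have sq: "sum_list q \<le> 30" using c unfolding chk_def by auto
  have "sum_list (map (\<lambda>(q',d). if d \<le> n then (Df * G q') $ (n-d) else 0) (trs q)) =
        sum_list (map (\<lambda>(q',d). if d \<le> n then PP q' $ (n-d) else 0) (trs q))"
  proof (rule arg_cong[where f = sum_list], rule map_cong[OF refl])
    fix x assume x: "x \<in> set (trs q)"
    obtain q' d where xe: "x = (q', d)" by fastforce
    have h: "q' \<in> set S" "d = 0 \<longrightarrow> sum_list q < sum_list q'" using c x unfolding chk_def list_all_iff xe by auto
    have sq': "sum_list q' \<le> 30" using chkS[OF h(1)] unfolding chk_def by auto
    show "(case x of (q',d) \<Rightarrow> if d \<le> n then (Df * G q') $ (n-d) else 0) =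
          (case x of (q',d) \<Rightarrow> if d \<le> n then PP q' $ (n-d) else 0)"
    proof (cases "d \<le> n")
      case True
      have "(n - d) * 100 + (100 - sum_list q') < n * 100 + (100 - sum_list q)"
      proof (cases "d = 0")
        case True then show ?thesis using h sq sq' by simp
      next
        case False
        then have "(n - d) * 100 \<le> (n - 1) * 100" by simp
        moreover have "(n - 1) * 100 + 100 = n * 100" using False \<open>d \<le> n\<close>
          by (cases n) auto
        ultimately show ?thesis using sq sq' by linarith
      qed
      then show ?thesis using less.hyps h(1) True unfolding xe by simp
    next
      case False then show ?thesis unfolding xe by simp
    qed
  qed
  then show ?case using Hc[OF less.prems] Pc[OF less.prems] by simp
qed




lemma tiling_card:
  assumes T: "T \<in> tilings R" and fin: "finite R"
  shows "card R = 6 * card T"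
proof -
  have R: "R = \<Union>T" using T unfolding tilings_def by auto
  have "T \<subseteq> Pow R" using R by auto
  then have fT: "finite T" using fin finite_subset by blast
  have pw: "pairwise disjnt T" using T unfolding tilings_def pairwise_def disjnt_def by auto
  have "card (\<Union>T) = sum card T"
    by (rule card_Union_disjoint[OF pw]) (use T tile_finite in \<open>auto simp: tilings_def\<close>)
  also have "\<dots> = sum (\<lambda>_. 6) T" using T tile_card unfolding tilings_def by (intro sum.cong) auto
  also have "\<dots> = 6 * card T" by simp
  finally show ?thesis using R by simp
qed

lemma card_rect: "card (rect 8 n) = 8 * n"
  unfolding rect_def by (simp add: card_cartesian_product)

lemma T23: "T23_8 N = (if 4 dvd N then cnt (rect 8 (3 * (N div 4))) else 0)"
proof (cases "4 dvd N")
  case True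
  then obtain k where N: "N = 4 * k" by blast
  have d: "4 dvd 3 * N" using True by simp
  have e: "3 * N div 4 = 3 * k" using N by simp
  have "{T. is_tiling 2 3 8 (3 * k) T \<and> card T = N} = tilings (rect 8 (3 * k))"
  proof (intro set_eqI iffI)
    fix T assume "T \<in> {T. is_tiling 2 3 8 (3 * k) T \<and> card T = N}"
    then show "T \<in> tilings (rect 8 (3 * k))" unfolding is_tiling_def tilings_def by simp
  next
    fix T assume T: "T \<in> tilings (rect 8 (3 * k))"
    have "card (rect 8 (3 * k)) = 6 * card T" using tiling_card[OF T] by (simp add: rect_def)
    then have "card T = N" using N card_rect[of "3 * k"] by simp
    then show "T \<in> {T. is_tiling 2 3 8 (3 * k) T \<and> card T = N}"
      using T unfolding is_tiling_def tilings_def by simp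
  qed
  then show ?thesis using True d e N unfolding T23_8_def num_tilings_def cnt_def by simp
next
  case False
  have "\<not> 4 dvd 3 * N" using False by presburger
  then show ?thesis using False unfolding T23_8_def by simp
qed

lemma num_mult_nth: "(numeral k * f) $ n = numeral k * (f $ n)"
  by (simp add: numeral_fps_const)

lemma zsS: "zs \<in> set S" by code_simp

lemma Pzs: "P zs = [1,0,0,-2,0,0,1]" by code_simp

lemma Dl_cf: "cf Dl n = (if n = 0 then 1 else if n = 3 then -3 else if n = 9 then 1 else if n = 12 then -1 else 0)"
proof (cases "n < 13")
  case True
  have "list_all (\<lambda>n. cf Dl n = (if n = 0 then 1 else if n = 3 then -3 else if n = 9 then 1 else if n = 12 then -1 else 0)) [0..<13]"
    by code_simp
  then show ?thesis using True by (simp add: list_all_iff)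
next
  case False then show ?thesis unfolding cf_def Dl_def by auto
qed

lemma Pzs_cf: "cf (P zs) n = (if n = 0 then 1 else if n = 3 then -2 else if n = 6 then 1 else 0)"
proof (cases "n < 7")
  case True
  have "list_all (\<lambda>n. cf [1,0,0,-2,0,0,1] n = (if n = 0 then 1 else if n = 3 then -2 else if n = 6 then 1 else 0)) [0..<7]"
    by code_simp
  then show ?thesis using True Pzs by (simp add: list_all_iff)
next
  case False then show ?thesis unfolding cf_def Pzs by auto
qed

definition A :: "nat \<Rightarrow> rat" where "A n = of_nat (cnt (rect 8 n))"

lemma G_zs: "G zs $ n = A n"
proof -
  have "Reg zs n = rect 8 n" unfolding Reg_def rect_def zs_def by auto
  moreover have "\<forall>x\<in>set zs. x \<le> n" unfolding zs_def by simp
  ultimately show ?thesis unfolding Gn g_def A_def by simp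
qed

lemma relA: "A n - 3 * (if n < 3 then 0 else A (n-3)) + (if n < 9 then 0 else A (n-9))
    - (if n < 12 then 0 else A (n-12)) = (if n = 0 then 1 else if n = 3 then -2 else if n = 6 then 1 else 0)"
proof -
  have Df: "Df = 1 - 3 * fps_X^3 + fps_X^9 - fps_X^12"
  proof (rule fps_ext)
    fix n
    show "Df $ n = (1 - 3 * fps_X^3 + fps_X^9 - fps_X^12 :: rat fps) $ n"
      unfolding Df_def by (simp add: Dl_cf num_mult_nth)
  qed
  have e: "Df * G zs = G zs - 3 * (fps_X^3 * G zs) + fps_X^9 * G zs - fps_X^12 * G zs"
    unfolding Df by (simp add: algebra_simps)
  have Xk: "(fps_X^k * G zs) $ n = (if n < k then 0 else A (n-k))" for k
    by (simp add: fps_X_power_mult_nth G_zs)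
  have "(Df * G zs) $ n = PP zs $ n" by (rule HP[OF zsS])
  then show ?thesis unfolding e PP_def
    by (simp add: num_mult_nth Xk G_zs Pzs_cf)
qed

definition F :: "rat fps" where "F = Abs_fps (\<lambda>N. of_nat (T23_8 N))"

lemma F_nth: "F $ N = (if 4 dvd N then A (3 * (N div 4)) else 0)"
  unfolding F_def A_def T23 by simp

lemma F_4: "F $ (4 * j) = A (3 * j)"
  unfolding F_nth by simp

lemma F_coeff:
  "F $ N - 3 * (if N < 4 then 0 else F $ (N-4)) + (if N < 12 then 0 else F $ (N-12))
    - (if N < 16 then 0 else F $ (N-16)) = (if N = 0 then 1 else if N = 4 then -2 else if N = 8 then 1 else 0)"
proof (cases "4 dvd N")
  case True
  then obtain k where N: "N = 4 * k" by blast
  have r: "A (3*k) - 3 * (if 3*k < 3 then 0 else A (3*k-3)) + (if 3*k < 9 then 0 else A (3*k-9))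
    - (if 3*k < 12 then 0 else A (3*k-12)) = (if 3*k = 0 then 1 else if 3*k = 3 then -2 else if 3*k = 6 then 1 else 0)"
    by (rule relA)
  have e0: "F $ N = A (3*k)" unfolding N by (rule F_4)
  have ek: "(if N < 4*j then 0 else F $ (N - 4*j)) = (if 3*k < 3*j then 0 else A (3*k - 3*j))" for j
  proof (cases "k < j")
    case True then show ?thesis using N by simp
  next
    case False
    then have h: "N - 4*j = 4*(k-j)" "3*k - 3*j = 3*(k-j)" "\<not> N < 4*j" "\<not> 3*k < 3*j" using N by auto
    show ?thesis unfolding if_not_P[OF h(3)] if_not_P[OF h(4)] h(1) h(2) by (rule F_4)
  qed
  have e1: "(if N < 4 then 0 else F $ (N-4)) = (if 3*k < 3 then 0 else A (3*k-3))" using ek[of 1] by (simp only: mult_1_right)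
  have e2: "(if N < 12 then 0 else F $ (N-12)) = (if 3*k < 9 then 0 else A (3*k-9))" proof -
    have h: "4*(3::nat) = 12" "3*(3::nat) = 9" by simp_all
    show ?thesis using ek[of 3] unfolding h .
  qed
  have e3: "(if N < 16 then 0 else F $ (N-16)) = (if 3*k < 12 then 0 else A (3*k-12))" proof -
    have h: "4*(4::nat) = 16" "3*(4::nat) = 12" by simp_all
    show ?thesis using ek[of 4] unfolding h .
  qed
  have e4: "(if N = 0 then 1 else if N = 4 then -2 else if N = 8 then 1 else 0) =
     (if 3*k = 0 then 1 else if 3*k = 3 then -2 else if 3*k = 6 then (1::rat) else 0)" using N by auto
  show ?thesis unfolding e0 e1 e2 e3 e4 by (rule r)
next
  case False
  have z: "F $ M = 0" if "\<not> 4 dvd M" for M using that unfolding F_nth by simp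
  have "\<not> 4 dvd (N - 4)" if "\<not> N < 4" using False that by (metis dvd_add_triv_right_iff le_add_diff_inverse2 not_less)
  moreover have "\<not> 4 dvd (N - 12)" if "\<not> N < 12" using False that by presburger
  moreover have "\<not> 4 dvd (N - 16)" if "\<not> N < 16" using False that by presburger
  moreover have "N \<noteq> 0" using False by (metis dvd_0_right)
  moreover have "N \<noteq> 4" "N \<noteq> 8" using False by auto
  ultimately show ?thesis using False z by simp
qed

theorem mainTheorem11:
  shows "Abs_fps (\<lambda>N. of_nat (T23_8 N)) =
    ((1 - fps_X ^ 4) ^ 2 / (1 - 3 * fps_X ^ 4 + fps_X ^ 12 - fps_X ^ 16) :: rat fps)"
proof -
  define D4 :: "rat fps" where "D4 = 1 - 3 * fps_X ^ 4 + fps_X ^ 12 - fps_X ^ 16"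
  have num: "(1 - fps_X ^ 4) ^ 2 = (1 - 2 * fps_X ^ 4 + fps_X ^ 8 :: rat fps)"
  proof -
    have "(fps_X::rat fps) ^ 8 = fps_X ^ 4 * fps_X ^ 4" by (simp add: power_add[symmetric])
    then show ?thesis by (simp add: power2_eq_square algebra_simps)
  qed
  have FD: "F * D4 = (1 - fps_X ^ 4) ^ 2"
  proof (rule fps_ext)
    fix N
    have e: "F * D4 = F - 3 * (fps_X^4 * F) + fps_X^12 * F - fps_X^16 * F"
      unfolding D4_def by (simp add: algebra_simps)
    show "(F * D4) $ N = ((1 - fps_X ^ 4) ^ 2) $ N"
      unfolding e num using F_coeff[of N] by (simp add: num_mult_nth fps_X_power_mult_nth)
  qed
  have D0: "D4 \<noteq> 0"
  proof
    assume "D4 = 0"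
    then have "D4 $ 0 = 0" by simp
    then show False unfolding D4_def by (simp add: num_mult_nth)
  qed
  have "(1 - fps_X ^ 4) ^ 2 / D4 = F" unfolding FD[symmetric] using D0 by (rule fps_divide_times_eq)
  then show ?thesis unfolding D4_def F_def by simp
qed


end
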